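(* Under the standing setting of the context, assume in addition $\beta\in(-2,0)$ and that $f$ is non-constant and does not depend on $\nabla\phi$. Let $\tau\in\mathfrak W_{<0}$. Then $\tau$ has at most one vertex $v$ with noise label $0$, and if such $v$ exists, it has exactly one outgoing edge $e$ whose derivative label $k$ satisfies $|k|_{\mathfrak s}=1$.
   Context: Standing setting. Integers $d\ge2$, $n\ge1$; $E$ a finite-dimensional real normed space; $\beta<0$. Scaling $\mathfrak s=(2,1,\dots,1)$, $|k|_{\mathfrak s}=2k_1+k_2+\dots+k_d$ for $k\in\mathbb N^d$; $\mathbb N^d_{<2}=\{k:|k|_{\mathfrak s}<2\}$. Jets: $\widehat{\mathcal J}=E^{\mathbb N^d}$, elements $\boldsymbol\phi=(\nabla^k\phi)_{k\in\mathbb N^d}$; $\mathcal J=E^{\mathbb N^d_{<2}}$, written $\boldsymbol\phi=(\phi,\nabla\phi)$; functions on $\mathcal J$ are viewed as functions on $\widehat{\mathcal J}$ depending on finitely many components. $P:\mathcal J\to E$ is a polynomial such that for some integer $p\ge2$ and linear $F:E^{\otimes p}\to E$, either $P(\boldsymbol\phi)=F(\phi^{\otimes p})$, or $q=(p-1)/2$ is an integer and $P(\boldsymbol\phi)=F(\phi^{\otimes p})+B(\nabla\phi\otimes\phi^{\otimes q})$ for a linear $B$; $\alpha=2/(p-1)$. $f=(f_1,\dots,f_n):\mathcal J\to L(\mathbb R^n,E)$ is smooth. Subcriticality: if $f$ is constant, $\beta>-\alpha-2$; if $f$ is non-constant but independent of $\nabla\phi$, $\beta>-2$; if $f$ depends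 on $\nabla\phi$, $\beta>-1$. Derivatives: for $\ell\in\mathbb N^d$, $D^\ell g$ is the derivative of $g$ in the $\ell$-th jet component; for a multiset $\mathbf k=\{k_1,\dots,k_r\}$ of elements of $\mathbb N^d$, $D^{\mathbf k}=D^{k_1}\cdots D^{k_r}$, $|\mathbf k|=r$, $|\mathbf k|_{\mathfrak s}=\sum|k_i|_{\mathfrak s}$. Trees: rooted trees with a polynomial label in $\mathbb N^d$ and a noise label in $\{0,\dots,n\}$ on each vertex and a derivative label in $\mathbb N^d$ on each edge, written uniquely (unordered product) as $\tau=X^k\Xi_j\prod_{i=1}^\ell\mathcal I^{k_i}[\tau_i]$: root with polynomial label $k$, noise label $j$, and $\ell$ edges with labels $k_i$ to the roots of subtrees $\tau_i$; $\Xi_0$ is also written $\mathbf 1$. Rules: $\mathfrak R_0=\{\mathbf k: D^{\mathbf k}P\ne0\}$; for $j\ge1$, $\mathfrak R_j=\emptyset$ if $f$ is constant, $\mathfrak R_j=\{\mathbf k:\text{all elements are }0\}$ if $f$ is non-constant and independent of $\nabla\phi$, $\mathfrak R_j=\{\mathbf k:|k|_{\mathfrak s}\le1\ \forall k\in\mathbf k\}$ if $f$ depends on $\nabla\phi$. $\tau$ is conforming if every $\tau_i$ is conforming and $\{k_1,\dots,k_\ell\}\in\mathfrak R_j$ (so every $X^k\Xi_j$ is conforming). Homogeneity: $|\Xi_j|_{\mathfrak s}=\beta$ ($j\ge1$), $|\mathbf 1|_{\mathfrak s}=0$, $|X^k\tau|_{\mathfrak s}=|k|_{\mathfrak s}+|\tau|_{\mathfrak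 s}$, $|\tau\sigma|_{\mathfrak s}=|\tau|_{\mathfrak s}+|\sigma|_{\mathfrak s}$, $|\mathcal I^k[\tau]|_{\mathfrak s}=|\tau|_{\mathfrak s}+2-|k|_{\mathfrak s}$. A leaf is a non-root vertex incident to exactly one edge; it is a polynomial leaf if its noise label is $0$. $\mathfrak W$ is the set of conforming trees with no polynomial leaves, and $\mathfrak W_{<0}=\{\tau\in\mathfrak W:-2<|\tau|_{\mathfrak s}<0\}$. An edge $\{v,w\}$ is outgoing from $v$ if $v$ lies on the path from $w$ to the root. *)

theory Defs
  imports "HOL-Analysis.Analysis" "HOL-Library.Multiset"
begin

text \<open>Multi-indices k in N^d are functions nat => nat supported in {0..<d};
  index 0 is the time coordinate (scaling 2), indices 1..d-1 are space (scaling 1).\<close>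

definition midx :: "nat \<Rightarrow> (nat \<Rightarrow> nat) \<Rightarrow> bool" where
  "midx d k \<longleftrightarrow> (\<forall>i\<ge>d. k i = 0)"

definition sdeg :: "nat \<Rightarrow> (nat \<Rightarrow> nat) \<Rightarrow> nat" where
  "sdeg d k = 2 * k 0 + (\<Sum>i\<in>{1..<d}. k i)"

definition zidx :: "nat \<Rightarrow> nat" where
  "zidx = (\<lambda>_. 0)"

definition uidx :: "nat \<Rightarrow> nat \<Rightarrow> nat" where
  "uidx i = (\<lambda>m. if m = i then 1 else 0)"

text \<open>Full jets: functions from multi-indices to E.  A function on the jet space J
  (components with |k|_s < 2) is a function on full jets depending only on those components.\<close>
type_synonym 'e jet = "(nat \<Rightarrow> nat) \<Rightarrow> 'e"

definition jet_fun :: "nat \<Rightarrow> ('e jet \<Rightarrow> 'b) \<Rightarrow> bool" where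
  "jet_fun d g \<longleftrightarrow> (\<forall>\<phi> \<psi>. (\<forall>k. midx d k \<and> sdeg d k < 2 \<longrightarrow> \<phi> k = \<psi> k) \<longrightarrow> g \<phi> = g \<psi>)"

coinductive smooth :: "('a::real_normed_vector \<Rightarrow> 'b::real_normed_vector) \<Rightarrow> bool" where
  "(\<And>x. (g has_derivative D x) (at x)) \<Longrightarrow> (\<And>h. smooth (\<lambda>x. D x h)) \<Longrightarrow> smooth g"

text \<open>A linear map E^{tensor p} -> E is the same as a p-multilinear map E^p -> E.\<close>
definition multilin :: "nat \<Rightarrow> ((nat \<Rightarrow> 'e::real_vector) \<Rightarrow> 'b::real_vector) \<Rightarrow> bool" where
  "multilin p F \<longleftrightarrow> (\<forall>v w. (\<forall>i<p. v i = w i) \<longrightarrow> F v = F w) \<and>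
     (\<forall>i<p. \<forall>v. linear (\<lambda>x. F (v(i := x))))"

text \<open>B is linear on (grad phi) tensor phi^{tensor q}, where grad phi in E^{d-1}
  is indexed by the spatial directions 1..d-1.\<close>
definition grad_multilin :: "nat \<Rightarrow> nat \<Rightarrow> ((nat \<Rightarrow> 'e::real_vector) \<Rightarrow> (nat \<Rightarrow> 'e) \<Rightarrow> 'e) \<Rightarrow> bool" where
  "grad_multilin d q B \<longleftrightarrow>
     (\<forall>a. multilin q (B a)) \<and>
     (\<forall>v a b. (\<forall>i\<in>{1..<d}. a i = b i) \<longrightarrow> B a v = B b v) \<and>
     (\<forall>v a b. B (\<lambda>i. a i + b i) v = B a v + B b v) \<and>
     (\<forall>v c a. B (\<lambda>i. c *\<^sub>R a i) v = c *\<^sub>R B a v)"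

definition admissible_P :: "nat \<Rightarrow> nat \<Rightarrow> ('e::real_vector jet \<Rightarrow> 'e) \<Rightarrow> bool" where
  "admissible_P d p P \<longleftrightarrow> p \<ge> 2 \<and>
     (\<exists>F. multilin p F \<and>
        ((\<forall>\<phi>. P \<phi> = F (\<lambda>_. \<phi> zidx)) \<or>
         (odd p \<and> (\<exists>B. grad_multilin d ((p - 1) div 2) B \<and>
            (\<forall>\<phi>. P \<phi> = F (\<lambda>_. \<phi> zidx) + B (\<lambda>i. \<phi> (uidx i)) (\<lambda>_. \<phi> zidx))))))"

definition jderiv :: "(nat \<Rightarrow> nat) \<Rightarrow> 'e::real_normed_vector \<Rightarrow> ('e jet \<Rightarrow> 'b::real_normed_vector) \<Rightarrow> 'e jet \<Rightarrow> 'b" where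
  "jderiv l h g \<phi> = vector_derivative (\<lambda>t::real. g (\<phi>(l := \<phi> l + t *\<^sub>R h))) (at 0)"

fun jderivs :: "((nat \<Rightarrow> nat) \<times> 'e::real_normed_vector) list \<Rightarrow> ('e jet \<Rightarrow> 'b::real_normed_vector) \<Rightarrow> 'e jet \<Rightarrow> 'b" where
  "jderivs [] g = g"
| "jderivs ((l, h) # xs) g = jderiv l h (jderivs xs g)"

definition Dk_nonzero :: "((nat \<Rightarrow> nat) multiset) \<Rightarrow> ('e::real_normed_vector jet \<Rightarrow> 'b::real_normed_vector) \<Rightarrow> bool" where
  "Dk_nonzero K g \<longleftrightarrow> (\<exists>xs \<phi>. mset (map fst xs) = K \<and> jderivs xs g \<phi> \<noteq> 0)"

definition f_constant :: "nat \<Rightarrow> (nat \<Rightarrow> 'e jet \<Rightarrow> 'e) \<Rightarrow> bool" where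
  "f_constant n f \<longleftrightarrow> (\<forall>i\<in>{1..n}. \<forall>\<phi> \<psi>. f i \<phi> = f i \<psi>)"

definition f_indep_grad :: "nat \<Rightarrow> (nat \<Rightarrow> 'e jet \<Rightarrow> 'e) \<Rightarrow> bool" where
  "f_indep_grad n f \<longleftrightarrow> (\<forall>i\<in>{1..n}. \<forall>\<phi> \<psi>. \<phi> zidx = \<psi> zidx \<longrightarrow> f i \<phi> = f i \<psi>)"

definition rules :: "nat \<Rightarrow> nat \<Rightarrow> (nat \<Rightarrow> 'e::real_normed_vector jet \<Rightarrow> 'e) \<Rightarrow> ('e jet \<Rightarrow> 'e)
    \<Rightarrow> nat \<Rightarrow> (nat \<Rightarrow> nat) multiset set" where
  "rules d n f P j =
     (if j = 0 then {K. Dk_nonzero K P}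
      else if f_constant n f then {}
      else if f_indep_grad n f then {K. \<forall>k\<in>#K. k = zidx}
      else {K. \<forall>k\<in>#K. sdeg d k \<le> 1})"

text \<open>Node k j ch: root with polynomial label k, noise label j, and the (unordered)
  multiset ch of pairs (edge derivative label, subtree).\<close>
datatype tree = Node "nat \<Rightarrow> nat" nat "((nat \<Rightarrow> nat) \<times> tree) multiset"

inductive conforming :: "nat \<Rightarrow> nat \<Rightarrow> (nat \<Rightarrow> (nat \<Rightarrow> nat) multiset set) \<Rightarrow> tree \<Rightarrow> bool"
  for d n R where
  "midx d k \<Longrightarrow> j \<le> n \<Longrightarrow> (\<forall>x\<in>set_mset ch. midx d (fst x) \<and> conforming d n R (snd x))
   \<Longrightarrow> image_mset fst ch \<in> R j \<Longrightarrow> conforming d n R (Node k j ch)"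

primrec hom :: "nat \<Rightarrow> real \<Rightarrow> tree \<Rightarrow> real" where
  "hom d \<beta> (Node k j ch) = real (sdeg d k) + (if j = 0 then 0 else \<beta>) +
     sum_mset (image_mset (\<lambda>(l, r). r + 2 - real (sdeg d l)) (image_mset (map_prod id (hom d \<beta>)) ch))"

inductive is_vertex :: "tree \<Rightarrow> tree \<Rightarrow> bool" where
  "is_vertex t t"
| "x \<in># ch \<Longrightarrow> is_vertex s (snd x) \<Longrightarrow> is_vertex s (Node k j ch)"

inductive nonroot_vertex :: "tree \<Rightarrow> tree \<Rightarrow> bool" where
  "x \<in># ch \<Longrightarrow> is_vertex s (snd x) \<Longrightarrow> nonroot_vertex s (Node k j ch)"

text \<open>A polynomial leaf is a non-root vertex with noise label 0 and no children
  (a non-root vertex incident to exactly one edge has no outgoing edges).\<close>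
definition no_poly_leaves :: "tree \<Rightarrow> bool" where
  "no_poly_leaves t \<longleftrightarrow> \<not> (\<exists>k. nonroot_vertex (Node k 0 {#}) t)"

primrec count0 :: "tree \<Rightarrow> nat" where
  "count0 (Node k j ch) = (if j = 0 then 1 else 0) + sum_mset (image_mset snd (image_mset (map_prod id count0) ch))"

definition W_neg :: "nat \<Rightarrow> nat \<Rightarrow> (nat \<Rightarrow> 'e::real_normed_vector jet \<Rightarrow> 'e) \<Rightarrow> ('e jet \<Rightarrow> 'e)
    \<Rightarrow> real \<Rightarrow> tree set" where
  "W_neg d n f P \<beta> = {t. conforming d n (rules d n f P) t \<and> no_poly_leaves t \<and>
      -2 < hom d \<beta> t \<and> hom d \<beta> t < 0}"

end

theory Submission
  imports Defs
begin


lemma multilin_line_deriv: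
  fixes M :: "(nat \<Rightarrow> 'e::real_normed_vector) \<Rightarrow> 'b::real_normed_vector"
  assumes ml: "multilin r M" and fin: "finite S"
  shows "S \<subseteq> {..<r} \<Longrightarrow> ((\<lambda>t. M (\<lambda>s. if s \<in> S then w s + t *\<^sub>R h else w s))
      has_vector_derivative (\<Sum>s\<in>S. M (w(s := h)))) (at 0)"
  using fin
proof (induction S arbitrary: w rule: finite_induct)
  case empty
  then show ?case by (simp add: has_vector_derivative_const)
next
  case (insert x S)
  have xr: "x < r" using insert by auto
  have lin: "linear (\<lambda>y. M (v(x := y)))" for v using ml xr unfolding multilin_def by auto
  define g1 where "g1 = (\<lambda>t. M (\<lambda>s. if s \<in> S then w s + t *\<^sub>R h else w s))"
  define g2 where "g2 = (\<lambda>t. M (\<lambda>s. if s \<in> S then (w(x:=h)) s + t *\<^sub>R h else (w(x:=h)) s))"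
  have eq: "M (\<lambda>s. if s \<in> insert x S then w s + t *\<^sub>R h else w s) = g1 t + t *\<^sub>R g2 t" for t
  proof -
    define v where "v = (\<lambda>s. if s \<in> S then w s + t *\<^sub>R h else w s)"
    have vx: "v x = w x" using insert by (simp add: v_def)
    have "(\<lambda>s. if s \<in> insert x S then w s + t *\<^sub>R h else w s) = v(x := w x + t *\<^sub>R h)"
      by (auto simp: v_def)
    hence "M (\<lambda>s. if s \<in> insert x S then w s + t *\<^sub>R h else w s) = M (v(x := w x)) + t *\<^sub>R M (v(x := h))"
      using linear_add[OF lin[of v]] linear_scale[OF lin[of v]] by simp
    also have "v(x := w x) = v" using vx by auto
    also have "v(x := h) = (\<lambda>s. if s \<in> S then (w(x:=h)) s + t *\<^sub>R h else (w(x:=h)) s)"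
      using insert by (auto simp: v_def)
    finally show ?thesis by (simp add: g1_def g2_def v_def)
  qed
  have d1: "(g1 has_vector_derivative (\<Sum>s\<in>S. M (w(s := h)))) (at 0)"
    unfolding g1_def by (rule insert.IH) (use insert in auto)
  have d2: "(g2 has_vector_derivative (\<Sum>s\<in>S. M ((w(x:=h))(s := h)))) (at 0)"
    unfolding g2_def by (rule insert.IH) (use insert in auto)
  have d3: "((\<lambda>t. t *\<^sub>R g2 t) has_vector_derivative (0 *\<^sub>R (\<Sum>s\<in>S. M ((w(x:=h))(s := h))) + 1 *\<^sub>R g2 0)) (at 0)"
    using has_vector_derivative_scaleR[OF _ d2, of "\<lambda>t. t" 1] by (auto intro: derivative_eq_intros)
  have g20: "g2 0 = M (w(x := h))"
    unfolding g2_def by (rule arg_cong[where f=M]) auto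
  have "((\<lambda>t. g1 t + t *\<^sub>R g2 t) has_vector_derivative ((\<Sum>s\<in>S. M (w(s := h))) + M (w(x := h)))) (at 0)"
    using has_vector_derivative_add[OF d1 d3] g20 by simp
  moreover have "(\<Sum>s\<in>insert x S. M (w(s := h))) = (\<Sum>s\<in>S. M (w(s := h))) + M (w(x := h))"
    using insert by (simp add: add.commute)
  moreover have "(\<lambda>t. M (\<lambda>s. if s \<in> insert x S then w s + t *\<^sub>R h else w s)) = (\<lambda>t. g1 t + t *\<^sub>R g2 t)"
    using eq by (rule ext)
  ultimately show ?case by metis
qed

type_synonym 'e mono = "nat \<times> ((nat \<Rightarrow> 'e) \<Rightarrow> 'e) \<times> (nat \<Rightarrow> (nat \<Rightarrow> nat) + 'e)"

definition slot :: "(nat \<Rightarrow> (nat \<Rightarrow> nat) + 'e) \<Rightarrow> 'e jet \<Rightarrow> nat \<Rightarrow> 'e" where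
  "slot c \<phi> s = (case c s of Inl l \<Rightarrow> \<phi> l | Inr v \<Rightarrow> v)"

fun evm :: "'e mono \<Rightarrow> 'e jet \<Rightarrow> 'e" where
  "evm (r, M, c) \<phi> = M (slot c \<phi>)"

fun dm :: "(nat \<Rightarrow> nat) \<Rightarrow> 'e \<Rightarrow> 'e mono \<Rightarrow> 'e mono list" where
  "dm l h (r, M, c) = map (\<lambda>s. (r, M, c(s := Inr h))) (filter (\<lambda>s. c s = Inl l) [0..<r])"

definition evl :: "'e::real_normed_vector mono list \<Rightarrow> 'e jet \<Rightarrow> 'e" where
  "evl ms \<phi> = sum_list (map (\<lambda>m. evm m \<phi>) ms)"

definition dl :: "(nat \<Rightarrow> nat) \<Rightarrow> 'e \<Rightarrow> 'e mono list \<Rightarrow> 'e mono list" where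
  "dl l h ms = concat (map (dm l h) ms)"

fun dls :: "((nat \<Rightarrow> nat) \<times> 'e) list \<Rightarrow> 'e mono list \<Rightarrow> 'e mono list" where
  "dls [] ms = ms"
| "dls ((l, h) # xs) ms = dl l h (dls xs ms)"

definition mlok :: "'e::real_normed_vector mono \<Rightarrow> bool" where
  "mlok m = multilin (fst m) (fst (snd m))"

lemma evm_deriv:
  fixes \<phi> :: "'e::real_normed_vector jet"
  assumes "multilin r M"
  shows "((\<lambda>t. evm (r, M, c) (\<phi>(l := \<phi> l + t *\<^sub>R h))) has_vector_derivative evl (dm l h (r, M, c)) \<phi>) (at 0)"
proof -
  define S where "S = {s. s < r \<and> c s = Inl l}"
  define w where "w = slot c \<phi>"
  have fS: "finite S" "S \<subseteq> {..<r}" by (auto simp: S_def)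
  have eq: "evm (r, M, c) (\<phi>(l := \<phi> l + t *\<^sub>R h)) = M (\<lambda>s. if s \<in> S then w s + t *\<^sub>R h else w s)" for t
  proof -
    have "\<forall>i<r. slot c (\<phi>(l := \<phi> l + t *\<^sub>R h)) i = (if i \<in> S then w i + t *\<^sub>R h else w i)"
      by (auto simp: S_def w_def slot_def split: sum.split)
    thus ?thesis using assms unfolding multilin_def by simp
  qed
  have ev: "evl (dm l h (r, M, c)) \<phi> = (\<Sum>s\<in>S. M (w(s := h)))"
  proof -
    have "evl (dm l h (r, M, c)) \<phi> = sum_list (map (\<lambda>s. M (slot (c(s := Inr h)) \<phi>)) (filter (\<lambda>s. c s = Inl l) [0..<r]))"
      by (simp add: evl_def o_def)
    also have "\<dots> = (\<Sum>s\<in>S. M (slot (c(s := Inr h)) \<phi>))"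
      by (subst sum_list_distinct_conv_sum_set) (auto simp: S_def intro: sum.cong)
    also have "\<dots> = (\<Sum>s\<in>S. M (w(s := h)))"
      by (intro sum.cong refl arg_cong[where f=M]) (auto simp: w_def slot_def)
    finally show ?thesis .
  qed
  show ?thesis unfolding eq ev using multilin_line_deriv[OF assms fS(1) fS(2)] by simp
qed

lemma evl_append: "evl (a @ b) \<phi> = evl a \<phi> + evl b \<phi>"
  by (simp add: evl_def)

lemma evl_deriv:
  fixes \<phi> :: "'e::real_normed_vector jet"
  assumes "\<forall>m\<in>set ms. mlok m"
  shows "((\<lambda>t. evl ms (\<phi>(l := \<phi> l + t *\<^sub>R h))) has_vector_derivative evl (dl l h ms) \<phi>) (at 0)"
  using assms
proof (induction ms)
  case Nil
  then show ?case by (simp add: evl_def dl_def has_vector_derivative_const)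
next
  case (Cons m ms)
  obtain r M c where m: "m = (r, M, c)" by (cases m) auto
  have ml: "multilin r M" using Cons.prems m by (simp add: mlok_def)
  have "((\<lambda>t. evm m (\<phi>(l := \<phi> l + t *\<^sub>R h)) + evl ms (\<phi>(l := \<phi> l + t *\<^sub>R h)))
     has_vector_derivative evl (dm l h m) \<phi> + evl (dl l h ms) \<phi>) (at 0)"
  proof -
    have IH: "((\<lambda>t. evl ms (\<phi>(l := \<phi> l + t *\<^sub>R h))) has_vector_derivative evl (dl l h ms) \<phi>) (at 0)"
      by (rule Cons.IH) (use Cons.prems in simp)
    show ?thesis using has_vector_derivative_add[OF evm_deriv[OF ml, of c \<phi> l h] IH] unfolding m .
  qed
  moreover have "evl (dl l h (m # ms)) \<phi> = evl (dm l h m) \<phi> + evl (dl l h ms) \<phi>"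
    by (simp add: dl_def evl_append)
  moreover have "evl (m # ms) = (\<lambda>\<phi>. evm m \<phi> + evl ms \<phi>)" by (auto simp: evl_def)
  ultimately show ?case by (simp only:)
qed

lemma dl_mlok: "\<forall>m\<in>set ms. mlok m \<Longrightarrow> \<forall>m\<in>set (dl l h ms). mlok m"
  by (auto simp: dl_def mlok_def)

lemma dls_mlok: "\<forall>m\<in>set ms. mlok m \<Longrightarrow> \<forall>m\<in>set (dls xs ms). mlok m"
  by (induction xs ms rule: dls.induct) (auto intro: dl_mlok[rule_format])

lemma jderiv_evl: "\<forall>m\<in>set ms. mlok m \<Longrightarrow> jderiv l h (evl ms) = evl (dl l h ms)"
  by (rule ext) (simp add: jderiv_def vector_derivative_at[OF evl_deriv])

lemma jderivs_evl: "\<forall>m\<in>set ms. mlok m \<Longrightarrow> jderivs xs (evl ms) = evl (dls xs ms)"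
  by (induction xs ms rule: dls.induct) (auto simp: jderiv_evl dls_mlok)

definition Uset :: "nat \<Rightarrow> nat \<Rightarrow> (nat \<Rightarrow> (nat \<Rightarrow> nat) + 'e) \<Rightarrow> nat set" where
  "Uset d r c = {s. s < r \<and> (\<exists>l. c s = Inl l \<and> sdeg d l = 1)}"

fun minv :: "nat \<Rightarrow> nat \<Rightarrow> 'e::real_normed_vector mono \<Rightarrow> bool" where
  "minv d D (r, M, c) \<longleftrightarrow> multilin r M \<and> (\<forall>s<r. \<forall>l. c s = Inl l \<longrightarrow> (l = zidx \<or> sdeg d l = 1))
     \<and> card (Uset d r c) \<le> D"

lemma minv_mlok: "minv d D m \<Longrightarrow> mlok m"
  by (cases m) (auto simp: mlok_def)

lemma dm_bad: assumes "minv d D m" "l \<noteq> zidx" "sdeg d l \<noteq> 1" shows "dm l h m = []"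
proof -
  obtain r M c where m: "m = (r, M, c)" by (cases m) auto
  have "\<forall>s<r. c s \<noteq> Inl l" using assms m by auto
  then have "filter (\<lambda>s. c s = Inl l) [0..<r] = []" by (auto simp: filter_empty_conv)
  then show ?thesis using m by simp
qed


lemma dm_inv:
  assumes "minv d D m" "m' \<in> set (dm l h m)"
  shows "if sdeg d l = 1 then D \<ge> 1 \<and> minv d (D - 1) m' else minv d D m'"
proof -
  obtain r M c where m: "m = (r, M, c)" by (cases m) auto
  obtain s where s: "s < r" "c s = Inl l" "m' = (r, M, c(s := Inr h))" using assms(2) m by auto
  have sub: "Uset d r (c(s := Inr h)) = Uset d r c - {s}" by (auto simp: Uset_def)
  have fin: "finite (Uset d r c)" by (auto simp: Uset_def)
  have inv: "multilin r M" "\<forall>s<r. \<forall>l. c s = Inl l \<longrightarrow> (l = zidx \<or> sdeg d l = 1)" "card (Uset d r c) \<le> D"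
    using assms(1) m by auto
  have inv2: "\<forall>s'<r. \<forall>l. (c(s := Inr h)) s' = Inl l \<longrightarrow> (l = zidx \<or> sdeg d l = 1)"
    using inv(2) by auto
  show ?thesis
  proof (cases "sdeg d l = 1")
    case True
    hence "s \<in> Uset d r c" using s by (auto simp: Uset_def)
    hence "card (Uset d r (c(s := Inr h))) = card (Uset d r c) - 1" "card (Uset d r c) \<ge> 1"
      using sub fin by (auto simp: card_gt_0_iff Suc_le_eq)
    then show ?thesis using True inv inv2 s(3) by simp
  next
    case False
    have "card (Uset d r (c(s := Inr h))) \<le> card (Uset d r c)" using sub fin by (simp add: card_mono)
    then show ?thesis using False inv inv2 s(3) by simp
  qed
qed


definition cu :: "nat \<Rightarrow> ((nat \<Rightarrow> nat) \<times> 'e) list \<Rightarrow> nat" where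
  "cu d xs = length (filter (\<lambda>l. sdeg d l = 1) (map fst xs))"

lemma dls_inv:
  assumes "\<forall>m\<in>set ms. minv d D m"
  shows "m \<in> set (dls xs ms) \<Longrightarrow> cu d xs \<le> D \<and> minv d (D - cu d xs) m"
proof (induction xs arbitrary: m)
  case Nil
  then show ?case using assms by (simp add: cu_def)
next
  case (Cons x xs)
  obtain l h where x: "x = (l, h)" by (cases x) auto
  from Cons.prems x obtain m0 where m0: "m0 \<in> set (dls xs ms)" "m \<in> set (dm l h m0)"
    by (auto simp: dl_def)
  have IH: "cu d xs \<le> D \<and> minv d (D - cu d xs) m0" using Cons.IH[OF m0(1)] .
  have cux: "cu d (x # xs) = (if sdeg d l = 1 then Suc (cu d xs) else cu d xs)" by (simp add: cu_def x)
  have di: "if sdeg d l = 1 then D - cu d xs \<ge> 1 \<and> minv d (D - cu d xs - 1) m else minv d (D - cu d xs) m"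
    using dm_inv[OF IH[THEN conjunct2] m0(2)] .
  show ?case
  proof (cases "sdeg d l = 1")
    case True
    then have "D - cu d xs \<ge> 1" "minv d (D - cu d xs - 1) m" using di by simp_all
    moreover have "D - cu d xs - 1 = D - cu d (x # xs)" using cux True by simp
    ultimately show ?thesis using cux True by simp
  next
    case False
    then show ?thesis using di IH cux by simp
  qed
qed

lemma dls_bad:
  assumes "\<forall>m\<in>set ms. minv d D m" "l \<noteq> zidx" "sdeg d l \<noteq> 1"
  shows "l \<in> set (map fst xs) \<Longrightarrow> dls xs ms = []"
proof (induction xs)
  case Nil
  then show ?case by simp
next
  case (Cons x xs)
  obtain l' h where x: "x = (l', h)" by (cases x) auto
  show ?case
  proof (cases "l' = l")
    case True
    have "\<forall>m\<in>set (dls xs ms). dm l h m = []"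
    proof
      fix m assume "m \<in> set (dls xs ms)"
      then have "minv d (D - cu d xs) m" using dls_inv[OF assms(1)] by blast
      then show "dm l h m = []" using dm_bad assms(2,3) by blast
    qed
    then show ?thesis using x True by (simp add: dl_def)
  next
    case False
    then have "dls xs ms = []" using Cons x by auto
    then show ?thesis using x by (simp add: dl_def)
  qed
qed


lemma sdeg_zidx[simp]: "sdeg d zidx = 0"
  by (simp add: sdeg_def zidx_def)

lemma sdeg_uidx: "1 \<le> i \<Longrightarrow> i < d \<Longrightarrow> sdeg d (uidx i) = 1"
  by (simp add: sdeg_def uidx_def)

lemma B_decomp:
  assumes "grad_multilin d q B"
  shows "B a v = (\<Sum>i\<in>{1..<d}. B (\<lambda>m. if m = i then a i else 0) v)"
proof -
  have add: "\<And>a b. B (\<lambda>i. a i + b i) v = B a v + B b v"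
    and dep: "\<And>a b. (\<forall>i\<in>{1..<d}. a i = b i) \<Longrightarrow> B a v = B b v"
    and sc: "\<And>c a. B (\<lambda>i. c *\<^sub>R a i) v = c *\<^sub>R B a v"
    using assms unfolding grad_multilin_def by blast+
  have z: "B (\<lambda>_. 0) v = 0" using sc[of 0 "\<lambda>_. 0"] by simp
  have gen: "finite A \<Longrightarrow> B (\<lambda>m. \<Sum>i\<in>A. g i m) v = (\<Sum>i\<in>A. B (g i) v)" for A g
  proof (induction A rule: finite_induct)
    case empty
    then show ?case using z by simp
  next
    case (insert x F)
    then show ?case using add[of "g x" "\<lambda>m. \<Sum>i\<in>F. g i m"] by simp
  qed
  have "B a v = B (\<lambda>m. \<Sum>i\<in>{1..<d}. if m = i then a i else 0) v"
    by (rule dep) auto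
  also have "\<dots> = (\<Sum>i\<in>{1..<d}. B (\<lambda>m. if m = i then a i else 0) v)"
    by (rule gen) simp
  finally show ?thesis .
qed

definition Bmono :: "((nat \<Rightarrow> 'e::real_vector) \<Rightarrow> (nat \<Rightarrow> 'e) \<Rightarrow> 'e) \<Rightarrow> nat \<Rightarrow> (nat \<Rightarrow> 'e) \<Rightarrow> 'e" where
  "Bmono B i v = B (\<lambda>m. if m = i then v 0 else 0) (\<lambda>s. v (Suc s))"

lemma Bmono_multilin:
  fixes B :: "(nat \<Rightarrow> 'e::real_vector) \<Rightarrow> (nat \<Rightarrow> 'e) \<Rightarrow> 'e"
  assumes "grad_multilin d q B"
  shows "multilin (Suc q) (Bmono B i)"
proof -
  have add: "\<And>a b v. B (\<lambda>i. a i + b i) v = B a v + B b v"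
    and sc: "\<And>c a v. B (\<lambda>i. c *\<^sub>R a i) v = c *\<^sub>R B a v"
    and ml: "\<And>a. multilin q (B a)"
    using assms unfolding grad_multilin_def by blast+
  have p1: "Bmono B i v = Bmono B i w" if "\<forall>j<Suc q. v j = w j" for v w
  proof -
    have "(\<lambda>m. if m = i then v 0 else 0) = (\<lambda>m. if m = i then w 0 else 0)" using that by auto
    moreover have "\<forall>j<q. v (Suc j) = w (Suc j)" using that by auto
    ultimately show ?thesis using ml unfolding Bmono_def multilin_def by metis
  qed
  have p2: "linear (\<lambda>x. Bmono B i (v(j := x)))" if "j < Suc q" for j v
  proof (cases j)
    case 0
    have e: "(\<lambda>s. (v(0 := x)) (Suc s)) = (\<lambda>s. v (Suc s))" for x by auto
    show ?thesis unfolding 0 Bmono_def e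
    proof (rule linearI)
      fix x y :: 'e
      show "B (\<lambda>m. if m = i then (v(0 := x + y)) 0 else 0) (\<lambda>s. v (Suc s)) =
        B (\<lambda>m. if m = i then (v(0 := x)) 0 else 0) (\<lambda>s. v (Suc s)) + B (\<lambda>m. if m = i then (v(0 := y)) 0 else 0) (\<lambda>s. v (Suc s))"
        using add[of "\<lambda>m. if m = i then x else 0" "\<lambda>m. if m = i then y else 0"]
        by (simp add: if_distrib cong: if_cong)
    next
      fix c :: real and x :: 'e
      show "B (\<lambda>m. if m = i then (v(0 := c *\<^sub>R x)) 0 else 0) (\<lambda>s. v (Suc s)) =
        c *\<^sub>R B (\<lambda>m. if m = i then (v(0 := x)) 0 else 0) (\<lambda>s. v (Suc s))"
        using sc[of c "\<lambda>m. if m = i then x else 0"]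
        by (simp add: if_distrib cong: if_cong)
    qed
  next
    case (Suc j')
    have jq: "j' < q" using that Suc by simp
    have e: "(\<lambda>s. (v(Suc j' := x)) (Suc s)) = (\<lambda>s. v (Suc s))(j' := x)" for x by auto
    have e2: "(v(Suc j' := x)) 0 = v 0" for x by simp
    show ?thesis unfolding Suc Bmono_def e e2
      using ml jq unfolding multilin_def by blast
  qed
  show ?thesis unfolding multilin_def using p1 p2 by blast
qed


lemma P_repr:
  fixes P :: "'e::real_normed_vector jet \<Rightarrow> 'e"
  assumes "admissible_P d p P"
  shows "\<exists>ms. (\<forall>m\<in>set ms. minv d 1 m) \<and> P = evl ms"
proof -
  obtain F where mF: "multilin p F" and cs: "(\<forall>\<phi>. P \<phi> = F (\<lambda>_. \<phi> zidx)) \<or>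
         (odd p \<and> (\<exists>B. grad_multilin d ((p - 1) div 2) B \<and>
            (\<forall>\<phi>. P \<phi> = F (\<lambda>_. \<phi> zidx) + B (\<lambda>i. \<phi> (uidx i)) (\<lambda>_. \<phi> zidx))))"
    using assms unfolding admissible_P_def by blast
  define m0 :: "'e mono" where "m0 = (p, F, \<lambda>_. Inl zidx)"
  have U0: "Uset d p (\<lambda>_. Inl zidx :: (nat \<Rightarrow> nat) + 'e) = {}" by (auto simp: Uset_def)
  have inv0: "minv d 1 m0" using mF U0 by (simp add: m0_def)
  have ev0: "evm m0 \<phi> = F (\<lambda>_. \<phi> zidx)" for \<phi>
    by (simp add: m0_def) (rule arg_cong[where f=F], auto simp: slot_def)
  from cs show ?thesis
  proof
    assume "\<forall>\<phi>. P \<phi> = F (\<lambda>_. \<phi> zidx)"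
    then have "P = evl [m0]" using ev0 by (auto simp: evl_def)
    then show ?thesis using inv0 by (intro exI[of _ "[m0]"]) simp
  next
    assume "odd p \<and> (\<exists>B. grad_multilin d ((p - 1) div 2) B \<and>
            (\<forall>\<phi>. P \<phi> = F (\<lambda>_. \<phi> zidx) + B (\<lambda>i. \<phi> (uidx i)) (\<lambda>_. \<phi> zidx)))"
    then obtain B where gB: "grad_multilin d ((p - 1) div 2) B"
      and PB: "\<forall>\<phi>. P \<phi> = F (\<lambda>_. \<phi> zidx) + B (\<lambda>i. \<phi> (uidx i)) (\<lambda>_. \<phi> zidx)" by blast
    define q where "q = (p - 1) div 2"
    define ci :: "nat \<Rightarrow> nat \<Rightarrow> (nat \<Rightarrow> nat) + 'e" where "ci i = (\<lambda>s. if s = 0 then Inl (uidx i) else Inl zidx)" for i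
    define ms where "ms = m0 # map (\<lambda>i. (Suc q, Bmono B i, ci i)) [1..<d]"
    have invi: "minv d 1 (Suc q, Bmono B i, ci i)" if "i \<in> {1..<d}" for i
    proof -
      have "Uset d (Suc q) (ci i) \<subseteq> {0}" by (auto simp: Uset_def ci_def)
      then have "card (Uset d (Suc q) (ci i)) \<le> card {0::nat}"
        by (intro card_mono) auto
      then have "card (Uset d (Suc q) (ci i)) \<le> 1" by simp
      moreover have "\<forall>s<Suc q. \<forall>l. ci i s = Inl l \<longrightarrow> (l = zidx \<or> sdeg d l = 1)"
        using that sdeg_uidx[of i d] by (auto simp: ci_def)
      ultimately show ?thesis using Bmono_multilin[OF gB[folded q_def]] by simp
    qed
    have evi: "evm (Suc q, Bmono B i, ci i) \<phi> = B (\<lambda>m. if m = i then \<phi> (uidx i) else 0) (\<lambda>_. \<phi> zidx)" for i \<phi>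
    proof -
      have a: "slot (ci i) \<phi> 0 = \<phi> (uidx i)" by (simp add: slot_def ci_def)
      have b: "(\<lambda>s. slot (ci i) \<phi> (Suc s)) = (\<lambda>_. \<phi> zidx)" by (simp add: slot_def ci_def)
      show ?thesis by (simp only: evm.simps Bmono_def a b)
    qed
    have "P \<phi> = evl ms \<phi>" for \<phi>
    proof -
      have "P \<phi> = F (\<lambda>_. \<phi> zidx) + (\<Sum>i\<in>{1..<d}. B (\<lambda>m. if m = i then \<phi> (uidx i) else 0) (\<lambda>_. \<phi> zidx))"
        using PB B_decomp[OF gB, of "\<lambda>i. \<phi> (uidx i)"] by simp
      also have "\<dots> = evl ms \<phi>"
      proof -
        have "evl ms \<phi> = evm m0 \<phi> + sum_list (map (\<lambda>i. evm (Suc q, Bmono B i, ci i) \<phi>) [1..<d])"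
          unfolding ms_def evl_def by (simp add: o_def)
        also have "sum_list (map (\<lambda>i. evm (Suc q, Bmono B i, ci i) \<phi>) [1..<d]) = (\<Sum>i\<in>{1..<d}. evm (Suc q, Bmono B i, ci i) \<phi>)"
          by (subst sum_list_distinct_conv_sum_set) auto
        finally show ?thesis using ev0 evi by simp
      qed
      finally show ?thesis .
    qed
    moreover have "\<forall>m\<in>set ms. minv d 1 m" using inv0 invi by (auto simp: ms_def)
    ultimately show ?thesis by (intro exI[of _ ms]) auto
  qed
qed

lemma Dk_P:
  fixes P :: "'e::real_normed_vector jet \<Rightarrow> 'e"
  assumes "admissible_P d p P" "Dk_nonzero K P"
  shows "(\<forall>k\<in>#K. sdeg d k \<le> 1) \<and> size {#k\<in>#K. sdeg d k = 1#} \<le> 1"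
proof -
  obtain ms where inv: "\<forall>m\<in>set ms. minv d 1 m" and Pe: "P = evl ms" using P_repr[OF assms(1)] by blast
  obtain xs \<phi> where K: "mset (map fst xs) = K" and nz: "jderivs xs P \<phi> \<noteq> 0"
    using assms(2) unfolding Dk_nonzero_def by blast
  have ml: "\<forall>m\<in>set ms. mlok m" using inv minv_mlok by blast
  have J: "jderivs xs P = evl (dls xs ms)" using jderivs_evl[OF ml] Pe by simp
  have ne: "dls xs ms \<noteq> []" using nz J by (auto simp: evl_def)
  have A: "\<forall>k\<in>#K. sdeg d k \<le> 1"
  proof
    fix k assume "k \<in># K"
    then have kin: "k \<in> set (map fst xs)" using K by auto
    show "sdeg d k \<le> 1"
    proof (rule ccontr)
      assume "\<not> sdeg d k \<le> 1"
      then have "k \<noteq> zidx" "sdeg d k \<noteq> 1" by auto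
      then show False using dls_bad[OF inv _ _ kin] ne by blast
    qed
  qed
  obtain m where "m \<in> set (dls xs ms)" using ne by (cases "dls xs ms") auto
  then have "cu d xs \<le> 1" using dls_inv[OF inv] by blast
  moreover have "size {#k\<in>#K. sdeg d k = 1#} = cu d xs"
    unfolding K[symmetric] cu_def by (metis mset_filter size_mset)
  ultimately show ?thesis using A by simp
qed



primrec ncount :: "tree \<Rightarrow> nat" where
  "ncount (Node k j ch) = (if j = 0 then 0 else 1) + sum_mset (image_mset snd (image_mset (map_prod id ncount) ch))"

primrec zcount :: "nat \<Rightarrow> tree \<Rightarrow> nat" where
  "zcount d (Node k j ch) = (if j = 0 \<and> size {#x\<in>#ch. sdeg d (fst x) = 1#} = 0 then 1 else 0)
     + sum_mset (image_mset snd (image_mset (map_prod id (zcount d)) ch))"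

lemma img_comp: "image_mset snd (image_mset (map_prod id g) ch) = image_mset (\<lambda>x. g (snd x)) ch"
  by (simp add: multiset.map_comp o_def)

lemma img_comp2: "image_mset (\<lambda>(l, r). r + 2 - real (sdeg d l)) (image_mset (map_prod id g) ch)
   = image_mset (\<lambda>x. g (snd x) + 2 - real (sdeg d (fst x))) ch"
  by (simp add: multiset.map_comp o_def case_prod_beta)

lemma msum_step:
  fixes a b :: "'a \<Rightarrow> real" and s :: "'a \<Rightarrow> nat"
  shows "\<forall>x\<in>#ch. a x \<ge> b x - 2 \<Longrightarrow> \<forall>x\<in>#ch. s x \<le> 1 \<Longrightarrow>
    sum_mset (image_mset (\<lambda>x. a x + 2 - real (s x)) ch) \<ge> sum_mset (image_mset b ch) - real (size {#x\<in>#ch. s x = 1#})"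
proof (induction ch)
  case empty
  then show ?case by simp
next
  case (add x ch)
  have "s x = 0 \<or> s x = 1" using add.prems by auto
  then show ?case using add by auto
qed

lemma hom_bound:
  assumes HR: "\<forall>j K. K \<in> R j \<longrightarrow> (\<forall>k\<in>#K. sdeg d k \<le> 1) \<and> size {#k\<in>#K. sdeg d k = 1#} \<le> (if j = 0 then 1 else 0)"
  shows "conforming d n R t \<Longrightarrow> hom d \<beta> t \<ge> (\<beta> + 2) * ncount t + count0 t + zcount d t - 2"
proof (induction t)
  case (Node k j ch)
  from Node.prems have conf: "\<forall>x\<in>#ch. conforming d n R (snd x)" and Rj: "image_mset fst ch \<in> R j"
    by (auto elim: conforming.cases)
  have IH: "\<forall>x\<in>#ch. hom d \<beta> (snd x) \<ge> (\<beta> + 2) * ncount (snd x) + count0 (snd x) + zcount d (snd x) - 2"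
  proof
    fix x assume x: "x \<in># ch"
    have "snd x \<in> Basic_BNFs.snds x" by (cases x) (simp add: prod_set_simps)
    then show "hom d \<beta> (snd x) \<ge> (\<beta> + 2) * ncount (snd x) + count0 (snd x) + zcount d (snd x) - 2"
      using Node.IH[OF x] conf x by blast
  qed
  have HRj: "(\<forall>k\<in>#image_mset fst ch. sdeg d k \<le> 1) \<and> size {#k\<in>#image_mset fst ch. sdeg d k = 1#} \<le> (if j = 0 then 1 else 0)"
    using HR Rj by blast
  have s1: "\<forall>x\<in>#ch. sdeg d (fst x) \<le> 1" using HRj by simp
  define a where "a = size {#x\<in>#ch. sdeg d (fst x) = 1#}"
  have "size {#k\<in>#image_mset fst ch. sdeg d k = 1#} = a"
    unfolding a_def by (simp add: filter_mset_image_mset)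
  hence aj: "a \<le> (if j = 0 then 1 else 0)" using HRj by simp
  define S where "S = sum_mset (image_mset (\<lambda>x. (\<beta> + 2) * ncount (snd x) + count0 (snd x) + zcount d (snd x)) ch)"
  have sumb: "sum_mset (image_mset (\<lambda>x. hom d \<beta> (snd x) + 2 - real (sdeg d (fst x))) ch) \<ge> S - a"
    unfolding S_def a_def by (rule msum_step[OF IH s1])
  have hom_eq: "hom d \<beta> (Node k j ch) = real (sdeg d k) + (if j = 0 then 0 else \<beta>) +
     sum_mset (image_mset (\<lambda>x. hom d \<beta> (snd x) + 2 - real (sdeg d (fst x))) ch)"
    by (simp add: img_comp2)
  have Seq: "S = (\<beta> + 2) * sum_mset (image_mset (\<lambda>x. real (ncount (snd x))) ch)
      + sum_mset (image_mset (\<lambda>x. real (count0 (snd x))) ch) + sum_mset (image_mset (\<lambda>x. real (zcount d (snd x))) ch)"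
    unfolding S_def by (simp add: sum_mset.distrib sum_mset_distrib_left)
  have rhs: "(\<beta> + 2) * ncount (Node k j ch) + count0 (Node k j ch) + zcount d (Node k j ch) - 2
     = (\<beta> + 2) * (if j = 0 then 0 else 1) + (if j = 0 then 1 else 0) + (if j = 0 \<and> a = 0 then 1 else 0) + S - 2"
  proof -
    have n: "real (ncount (Node k j ch)) = (if j = 0 then 0 else 1) + sum_mset (image_mset (\<lambda>x. real (ncount (snd x))) ch)"
      by (simp add: img_comp multiset.map_comp o_def)
    have c: "real (count0 (Node k j ch)) = (if j = 0 then 1 else 0) + sum_mset (image_mset (\<lambda>x. real (count0 (snd x))) ch)"
      by (simp add: img_comp multiset.map_comp o_def)
    have z: "real (zcount d (Node k j ch)) = (if j = 0 \<and> a = 0 then 1 else 0) + sum_mset (image_mset (\<lambda>x. real (zcount d (snd x))) ch)"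
      by (auto simp: img_comp multiset.map_comp o_def a_def)
    show ?thesis unfolding n c z Seq by (simp add: algebra_simps)
  qed
  have "0 \<le> real (sdeg d k)" by simp
  show ?case
  proof (cases "j = 0")
    case True
    then have "a = 0 \<or> a = 1" using aj by auto
    then show ?thesis unfolding rhs hom_eq using sumb True by auto
  next
    case False
    then have "a = 0" using aj by auto
    then show ?thesis unfolding rhs hom_eq using sumb False by (auto simp: algebra_simps)
  qed
qed


lemma mem_le_sum_mset: "x \<in># M \<Longrightarrow> (f x :: nat) \<le> sum_mset (image_mset f M)"
  by (metis le_add1 multi_member_split image_mset_add_mset sum_mset.add_mset)

lemma vertex_mono:
  assumes "is_vertex s t"
  shows "count0 s \<le> count0 t \<and> zcount d s \<le> zcount d t \<and> (conforming d n R t \<longrightarrow> conforming d n R s)"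
  using assms
proof (induction rule: is_vertex.induct)
  case (1 t)
  then show ?case by simp
next
  case (2 x ch s k j)
  have a: "count0 (snd x) \<le> count0 (Node k j ch)"
    using mem_le_sum_mset[OF 2(1), of "\<lambda>x. count0 (snd x)"] by (simp add: img_comp)
  have b: "zcount d (snd x) \<le> zcount d (Node k j ch)"
    using mem_le_sum_mset[OF 2(1), of "\<lambda>x. zcount d (snd x)"] by (simp add: img_comp)
  have c: "conforming d n R (Node k j ch) \<longrightarrow> conforming d n R (snd x)"
    using 2(1) by (auto elim: conforming.cases)
  show ?case using 2(3) a b c by auto
qed

lemma is_vertex_of_nonroot: "nonroot_vertex s t \<Longrightarrow> is_vertex s t"
  by (induction rule: nonroot_vertex.induct) (auto intro: is_vertex.intros)

lemma ncount_zero: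
  "ncount t = 0 \<Longrightarrow> (\<exists>k. t = Node k 0 {#}) \<or> (\<exists>k. nonroot_vertex (Node k 0 {#}) t)"
proof (induction t)
  case (Node k j ch)
  have j: "j = 0" and all: "\<forall>x\<in>#ch. ncount (snd x) = 0"
    using Node.prems by (auto simp: img_comp split: if_splits)
  show ?case
  proof (cases "ch = {#}")
    case True
    then show ?thesis using j by simp
  next
    case False
    then obtain x where x: "x \<in># ch" by blast
    have "snd x \<in> Basic_BNFs.snds x" by (cases x) (simp add: prod_set_simps)
    then have "(\<exists>k. snd x = Node k 0 {#}) \<or> (\<exists>k. nonroot_vertex (Node k 0 {#}) (snd x))"
      using Node.IH[OF x] all x by blast
    then obtain k' where "is_vertex (Node k' 0 {#}) (snd x)"
      by (metis is_vertex.intros(1) is_vertex_of_nonroot)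
    then have "nonroot_vertex (Node k' 0 {#}) (Node k j ch)"
      using x by (auto intro: nonroot_vertex.intros)
    then show ?thesis by blast
  qed
qed



theorem lemma6:
  fixes d n p :: nat and \<beta> :: real
    and f :: "nat \<Rightarrow> 'e::real_normed_vector jet \<Rightarrow> 'e"
    and P :: "'e jet \<Rightarrow> 'e"
    and \<tau> :: tree
  assumes "d \<ge> 2" and "n \<ge> 1"
    and "\<exists>S::'e set. finite S \<and> span S = UNIV"
    and "admissible_P d p P"
    and "\<forall>i\<in>{1..n}. jet_fun d (f i)"
    and "\<forall>i\<in>{1..n}. smooth (\<lambda>x::'e. f i (\<lambda>k. if k = zidx then x else 0))"
    and "\<not> f_constant n f" and "f_indep_grad n f"
    and "-2 < \<beta>" and "\<beta> < 0"
    and "\<tau> \<in> W_neg d n f P \<beta>"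
  shows "count0 \<tau> \<le> 1 \<and>
    (\<forall>k ch. is_vertex (Node k 0 ch) \<tau> \<longrightarrow> size {# x \<in># ch. sdeg d (fst x) = 1 #} = 1)"
proof -
  define R where "R = rules d n f P"
  have conf: "conforming d n R \<tau>" and npl: "no_poly_leaves \<tau>" and hneg: "hom d \<beta> \<tau> < 0"
    using assms(11) by (auto simp: W_neg_def R_def)
  have R0: "K \<in> R 0 \<longleftrightarrow> Dk_nonzero K P" for K by (simp add: R_def rules_def)
  have Rj: "j \<noteq> 0 \<Longrightarrow> K \<in> R j \<longleftrightarrow> (\<forall>k\<in>#K. k = zidx)" for j K
    using assms(7,8) by (simp add: R_def rules_def)
  have HR: "\<forall>j K. K \<in> R j \<longrightarrow> (\<forall>k\<in>#K. sdeg d k \<le> 1) \<and> size {#k\<in>#K. sdeg d k = 1#} \<le> (if j = 0 then 1 else 0)"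
  proof (intro allI impI)
    fix j K assume K: "K \<in> R j"
    show "(\<forall>k\<in>#K. sdeg d k \<le> 1) \<and> size {#k\<in>#K. sdeg d k = 1#} \<le> (if j = 0 then 1 else 0)"
    proof (cases "j = 0")
      case True
      then show ?thesis using Dk_P[OF assms(4)] K R0 by simp
    next
      case False
      then have z: "\<forall>k\<in>#K. k = zidx" using Rj K by blast
      then have "{#k\<in>#K. sdeg d k = 1#} = {#}" by (auto simp: filter_mset_eq_conv)
      then show ?thesis using z False by auto
    qed
  qed
  have bound: "hom d \<beta> \<tau> \<ge> (\<beta> + 2) * ncount \<tau> + count0 \<tau> + zcount d \<tau> - 2"
    using hom_bound[OF HR conf] .
  have N: "ncount \<tau> \<ge> 1"
  proof (rule ccontr)
    assume "\<not> ncount \<tau> \<ge> 1"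
    then have "ncount \<tau> = 0" by simp
    from ncount_zero[OF this] show False
    proof
      assume "\<exists>k. \<tau> = Node k 0 {#}"
      then obtain k where "\<tau> = Node k 0 {#}" by blast
      then have "hom d \<beta> \<tau> \<ge> 0" by simp
      then show False using hneg by simp
    next
      assume "\<exists>k. nonroot_vertex (Node k 0 {#}) \<tau>"
      then show False using npl by (simp add: no_poly_leaves_def)
    qed
  qed
  have "(\<beta> + 2) * ncount \<tau> \<ge> \<beta> + 2"
  proof -
    have "real (ncount \<tau>) \<ge> 1" using N by simp
    moreover have "\<beta> + 2 \<ge> 0" using assms(9) by simp
    ultimately have "(\<beta> + 2) * 1 \<le> (\<beta> + 2) * ncount \<tau>" by (intro mult_left_mono)
    then show ?thesis by simp
  qed
  then have lt: "real (count0 \<tau> + zcount d \<tau>) < 2" using bound hneg assms(9) by linarith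
  then have MZ: "count0 \<tau> + zcount d \<tau> \<le> 1" by linarith
  have V: "size {# x \<in># ch. sdeg d (fst x) = 1 #} = 1" if v: "is_vertex (Node k 0 ch) \<tau>" for k ch
  proof -
    have vm: "count0 (Node k 0 ch) \<le> count0 \<tau>" "zcount d (Node k 0 ch) \<le> zcount d \<tau>"
      "conforming d n R (Node k 0 ch)" using vertex_mono[OF v, of d n R] conf by auto
    have "image_mset fst ch \<in> R 0" using vm(3) by (auto elim: conforming.cases)
    then have "size {#k\<in>#image_mset fst ch. sdeg d k = 1#} \<le> 1" using HR[rule_format, of "image_mset fst ch" 0] by simp
    then have le1: "size {# x \<in># ch. sdeg d (fst x) = 1 #} \<le> 1" by (simp add: filter_mset_image_mset)
    have "count0 (Node k 0 ch) \<ge> 1" by simp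
    moreover have "size {# x \<in># ch. sdeg d (fst x) = 1 #} = 0 \<Longrightarrow> zcount d (Node k 0 ch) \<ge> 1" by simp
    ultimately show ?thesis using le1 vm MZ by linarith
  qed
  show ?thesis using MZ V by auto
qed

end
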